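(* Let $(z_n)_{n\ge0}$ be a homogeneous Markov chain on $\mathbb{Z}_+^k$ satisfying assumptions (A1) and (A2) below, with associated maps $p_w$ and distribution process $(x_n)$. If $K\subset S_k$ is a compact set satisfying $$\sup_{x\in K}\sum_w p_w(x)\,\alpha(w)<0,$$ then $P\big[\{L(x_n)\subset K\}\cap\{\lim_{n\to\infty}|z_n|=+\infty\}\big]=0$.
   Context: Fix integers $k\ge1$ and $m\ge1$. For $w\in\mathbb{Z}^k$ put $|w|=\sum_i|w^i|$ and $\alpha(w)=\sum_i w^i$. $\mathbb{Z}_+^k=\{z\in\mathbb{Z}^k: z^i\ge0\ \forall i\}$, $S_k=\{x\in\mathbb{R}^k: x^i\ge0,\ \sum_i x^i=1\}$. $(z_n)$ has transition kernel $\Pi(z,z')=P[z_{n+1}=z'\mid z_n=z]$; $x_n=z_n/|z_n|$ if $z_n\neq0$ and $x_n=0$ otherwise. (A1) $|z_{n+1}-z_n|\le m$ for all $n$. (A2) There exist Lipschitz maps $p_w:S_k\to[0,1]$, $w\in\mathbb{Z}^k$, $|w|\le m$, and $a>0$ with $|p_w(z/|z|)-\Pi(z,z+w)|\le a/|z|$ for all nonzero $z\in\mathbb{Z}_+^k$ and $|w|\le m$. Sums over $w$ range over $w\in\mathbb{Z}^k$ with $|w|\le m$. $L(x_n)$ denotes the set of limit points of the sequence $(x_n)$. *)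

theory Defs
  imports "HOL-Analysis.Analysis" "HOL-Probability.Probability"
begin

text \<open>Lattice points are elements of int^'k; the dimension is k = CARD('k).\<close>

definition norm1 :: "int ^ 'k::finite \<Rightarrow> int" where
  "norm1 w = (\<Sum>i\<in>UNIV. \<bar>w $ i\<bar>)"

definition alpha :: "int ^ 'k::finite \<Rightarrow> int" where
  "alpha w = (\<Sum>i\<in>UNIV. w $ i)"

definition Zplus :: "(int ^ 'k::finite) set" where
  "Zplus = {z. \<forall>i. 0 \<le> z $ i}"

definition std_simplex_k :: "(real ^ 'k::finite) set" where
  "std_simplex_k = {x. (\<forall>i. 0 \<le> x $ i) \<and> (\<Sum>i\<in>UNIV. x $ i) = 1}"

definition distrib :: "int ^ 'k::finite \<Rightarrow> real ^ 'k" where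
  "distrib z = (if z = 0 then 0
                else (1 / real_of_int (norm1 z)) *\<^sub>R (\<chi> i. real_of_int (z $ i)))"

definition limit_points :: "(nat \<Rightarrow> 'a::topological_space) \<Rightarrow> 'a set" where
  "limit_points X = {l. \<exists>r. strict_mono r \<and> (X \<circ> r) \<longlonglongrightarrow> l}"

end

theory Submission
  imports Defs
begin

lemma disc:
  fixes X :: "'a \<Rightarrow> 'b::countable"
  assumes X: "X \<in> measurable M (count_space UNIV)" and g: "g \<in> borel_measurable M"
  shows "(\<integral>\<^sup>+\<omega>. g \<omega> \<partial>M) = (\<integral>\<^sup>+x. (\<integral>\<^sup>+\<omega>. g \<omega> * indicator {\<omega>\<in>space M. X \<omega> = x} \<omega> \<partial>M) \<partial>count_space UNIV)"
proof -
  have sets: "{\<omega>\<in>space M. X \<omega> = x} \<in> sets M" for x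
    using X by (simp add: measurable_count_space_eq2_countable vimage_def Int_def conj_commute)
  have "(\<integral>\<^sup>+x. (\<integral>\<^sup>+\<omega>. g \<omega> * indicator {\<omega>\<in>space M. X \<omega> = x} \<omega> \<partial>M) \<partial>count_space UNIV)
      = (\<integral>\<^sup>+\<omega>. (\<integral>\<^sup>+x. g \<omega> * indicator {\<omega>\<in>space M. X \<omega> = x} \<omega> \<partial>count_space UNIV) \<partial>M)"
    by (rule nn_integral_count_space_nn_integral[symmetric]) (use g sets in auto)
  also have "\<dots> = (\<integral>\<^sup>+\<omega>. g \<omega> \<partial>M)"
  proof (rule nn_integral_cong)
    fix \<omega> assume w: "\<omega> \<in> space M"
    have "(\<integral>\<^sup>+x. g \<omega> * indicator {\<omega>\<in>space M. X \<omega> = x} \<omega> \<partial>count_space UNIV)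
        = (\<integral>\<^sup>+x. g \<omega> * indicator {X \<omega>} x \<partial>count_space UNIV)"
      using w by (intro nn_integral_cong) (auto simp: indicator_def)
    also have "\<dots> = g \<omega>" by simp
    finally show "(\<integral>\<^sup>+x. g \<omega> * indicator {\<omega>\<in>space M. X \<omega> = x} \<omega> \<partial>count_space UNIV) = g \<omega>" .
  qed
  finally show ?thesis by simp
qed

lemma hist_meas:
  fixes z :: "nat \<Rightarrow> 'a \<Rightarrow> 'b::countable"
  assumes meas: "\<And>n. z n \<in> measurable M (count_space UNIV)"
  shows "(\<lambda>\<omega>. map (\<lambda>i. z i \<omega>) [0..<Suc n]) \<in> measurable M (count_space UNIV)"
proof (induction n)
  case 0
  have "(\<lambda>\<omega>. [z 0 \<omega>]) \<in> measurable M (count_space UNIV)"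
    using measurable_compose[OF meas[of 0], of "\<lambda>x. [x]"] by simp
  then show ?case by simp
next
  case (Suc n)
  have e: "(\<lambda>\<omega>. map (\<lambda>i. z i \<omega>) [0..<Suc (Suc n)]) = (\<lambda>\<omega>. (\<lambda>(a,b). a @ [b]) (map (\<lambda>i. z i \<omega>) [0..<Suc n], z (Suc n) \<omega>))"
    by auto
  show ?case unfolding e
    by (rule measurable_compose[OF measurable_Pair[OF Suc meas[of "Suc n"]]]) simp
qed

lemma exp_le_quad:
  fixes t :: real assumes "\<bar>t\<bar> \<le> 1" shows "exp t \<le> 1 + t + t\<^sup>2"
proof (cases "0 \<le> t")
  case True then show ?thesis using exp_bound assms by auto
next
  case False
  define s where "s = - t"
  have s: "0 < s" "s \<le> 1" using False assms by (auto simp: s_def)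
  have "1 + s \<le> exp s" by (rule exp_ge_add_one_self)
  hence "exp t \<le> 1 / (1 + s)" using s by (simp add: s_def exp_minus field_simps)
  also have "\<dots> \<le> 1 - s + s\<^sup>2" using s by (simp add: field_simps power2_eq_square)
  finally show ?thesis by (simp add: s_def)
qed

definition hist :: "(nat \<Rightarrow> 'a \<Rightarrow> 'b) \<Rightarrow> nat \<Rightarrow> 'a \<Rightarrow> 'b list" where
  "hist z n \<omega> = map (\<lambda>i. z i \<omega>) [0..<Suc n]"

lemma hist_eq_iff: "length l = Suc n \<Longrightarrow> hist z n \<omega> = l \<longleftrightarrow> (\<forall>i\<le>n. z i \<omega> = l ! i)"
  unfolding hist_def by (auto simp: list_eq_iff_nth_eq nth_upt less_Suc_eq_le simp del: upt_Suc)

lemma hist_length[simp]: "length (hist z n \<omega>) = Suc n"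
  by (simp add: hist_def)

lemma hist_nth: "i \<le> n \<Longrightarrow> hist z n \<omega> ! i = z i \<omega>"
  unfolding hist_def by (simp add: nth_upt less_Suc_eq_le del: upt_Suc)

lemma hist_last: "last (hist z n \<omega>) = z n \<omega>"
proof -
  have "hist z n \<omega> \<noteq> []" using hist_length[of z n \<omega>] by (metis list.size(3) nat.distinct(1))
  then show ?thesis by (simp add: last_conv_nth hist_nth)
qed

lemma hist_measurable:
  fixes z :: "nat \<Rightarrow> 'a \<Rightarrow> 'b::countable"
  assumes meas: "\<And>n. z n \<in> measurable M (count_space UNIV)"
  shows "hist z n \<in> measurable M (count_space UNIV)"
  unfolding hist_def[abs_def] using hist_meas[OF meas] .

lemma markov_list:
  fixes z :: "nat \<Rightarrow> 'a \<Rightarrow> int ^ 'k::finite" and Pi :: "int ^ 'k \<Rightarrow> int ^ 'k \<Rightarrow> real"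
  assumes markov: "\<And>n (s :: nat \<Rightarrow> int ^ 'k).
        measure M {\<omega> \<in> space M. \<forall>i\<le>Suc n. z i \<omega> = s i}
      = measure M {\<omega> \<in> space M. \<forall>i\<le>n. z i \<omega> = s i} * Pi (s n) (s (Suc n))"
    and len: "length l = Suc n"
  shows "measure M {\<omega> \<in> space M. hist z n \<omega> = l \<and> z (Suc n) \<omega> = y'}
       = measure M {\<omega> \<in> space M. hist z n \<omega> = l} * Pi (last l) y'"
proof -
  define s where "s = (\<lambda>i. if i \<le> n then l ! i else y')"
  have 1: "{\<omega> \<in> space M. \<forall>i\<le>Suc n. z i \<omega> = s i} = {\<omega> \<in> space M. hist z n \<omega> = l \<and> z (Suc n) \<omega> = y'}"
    using len by (auto simp: hist_eq_iff s_def le_Suc_eq)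
  have 2: "{\<omega> \<in> space M. \<forall>i\<le>n. z i \<omega> = s i} = {\<omega> \<in> space M. hist z n \<omega> = l}"
    using len by (auto simp: hist_eq_iff s_def)
  have 3: "s n = last l" "s (Suc n) = y'" proof -
    have "l \<noteq> []" using len by auto
    then show "s n = last l" "s (Suc n) = y'" using len by (auto simp: s_def last_conv_nth)
  qed
  show ?thesis using markov[of n s] unfolding 1 2 3 .
qed

lemma key_step:
  fixes M :: "'a measure" and z :: "nat \<Rightarrow> 'a \<Rightarrow> int ^ 'k::finite"
    and Pi :: "int ^ 'k \<Rightarrow> int ^ 'k \<Rightarrow> real" and F :: "int ^ 'k \<Rightarrow> real"
  assumes prob: "prob_space M"
    and meas: "\<And>n. z n \<in> measurable M (count_space UNIV)"
    and kernel_nonneg: "\<And>y y'. 0 \<le> Pi y y'"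
    and markov: "\<And>n (s :: nat \<Rightarrow> int ^ 'k).
        measure M {\<omega> \<in> space M. \<forall>i\<le>Suc n. z i \<omega> = s i}
      = measure M {\<omega> \<in> space M. \<forall>i\<le>n. z i \<omega> = s i} * Pi (s n) (s (Suc n))"
    and A1: "\<And>n. AE \<omega> in M. norm1 (z (Suc n) \<omega> - z n \<omega>) \<le> int m"
    and Fnn: "\<And>y. 0 \<le> F y"
    and Fstep: "\<And>y. y \<in> G \<Longrightarrow> (\<And>y'. int m < norm1 (y' - y) \<Longrightarrow> Pi y y' = 0) \<Longrightarrow>
          (\<integral>\<^sup>+y'. ennreal (Pi y y' * F y') \<partial>count_space UNIV) \<le> ennreal (F y)"
    and QG: "\<And>l. Q l \<Longrightarrow> length l = Suc n \<Longrightarrow> last l \<in> G"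
  shows "(\<integral>\<^sup>+\<omega>. ennreal (F (z (Suc n) \<omega>)) * indicator {\<omega>. Q (hist z n \<omega>)} \<omega> \<partial>M)
       \<le> (\<integral>\<^sup>+\<omega>. ennreal (F (z n \<omega>)) * indicator {\<omega>. Q (hist z n \<omega>)} \<omega> \<partial>M)"
proof -
  interpret prob_space M by (rule prob)
  have hm[measurable]: "hist z n \<in> measurable M (count_space UNIV)" by (rule hist_measurable[OF meas])
  have zm[measurable]: "z i \<in> measurable M (count_space UNIV)" for i by (rule meas)
  have Hs[measurable]: "{\<omega>\<in>space M. hist z n \<omega> = l} \<in> sets M" for l by measurable
  have Zs[measurable]: "{\<omega>\<in>space M. z i \<omega> = y} \<in> sets M" for i y by measurable
  have Qm: "(\<lambda>\<omega>. indicator {\<omega>. Q (hist z n \<omega>)} \<omega> :: ennreal) \<in> borel_measurable M"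
  proof -
    have "(\<lambda>\<omega>. indicator {l. Q l} (hist z n \<omega>) :: ennreal) \<in> borel_measurable M" by measurable
    then show ?thesis by (simp add: indicator_def)
  qed
  have Fm: "(\<lambda>\<omega>. ennreal (F (z i \<omega>))) \<in> borel_measurable M" for i by measurable
  define E where "E l = emeasure M {\<omega>\<in>space M. hist z n \<omega> = l}" for l
  define E2 where "E2 l y' = emeasure M {\<omega>\<in>space M. hist z n \<omega> = l \<and> z (Suc n) \<omega> = y'}" for l y'
  have L: "(\<integral>\<^sup>+\<omega>. ennreal (F (z (Suc n) \<omega>)) * indicator {\<omega>. Q (hist z n \<omega>)} \<omega> \<partial>M)
     = (\<integral>\<^sup>+l. indicator {l. Q l} l * (\<integral>\<^sup>+y'. ennreal (F y') * E2 l y' \<partial>count_space UNIV) \<partial>count_space UNIV)"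
  proof -
    have "(\<integral>\<^sup>+\<omega>. ennreal (F (z (Suc n) \<omega>)) * indicator {\<omega>. Q (hist z n \<omega>)} \<omega> \<partial>M)
      = (\<integral>\<^sup>+l. (\<integral>\<^sup>+\<omega>. (ennreal (F (z (Suc n) \<omega>)) * indicator {\<omega>. Q (hist z n \<omega>)} \<omega>) * indicator {\<omega>\<in>space M. hist z n \<omega> = l} \<omega> \<partial>M) \<partial>count_space UNIV)"
      by (rule disc[OF hm, of "\<lambda>\<omega>. ennreal (F (z (Suc n) \<omega>)) * indicator {\<omega>. Q (hist z n \<omega>)} \<omega>"]) (use Fm Qm in simp)
    also have "\<dots> = (\<integral>\<^sup>+l. indicator {l. Q l} l * (\<integral>\<^sup>+y'. ennreal (F y') * E2 l y' \<partial>count_space UNIV) \<partial>count_space UNIV)"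
    proof (rule nn_integral_cong)
      fix l
      have "(\<integral>\<^sup>+\<omega>. (ennreal (F (z (Suc n) \<omega>)) * indicator {\<omega>. Q (hist z n \<omega>)} \<omega>) * indicator {\<omega>\<in>space M. hist z n \<omega> = l} \<omega> \<partial>M)
          = (\<integral>\<^sup>+\<omega>. indicator {l. Q l} l * (ennreal (F (z (Suc n) \<omega>)) * indicator {\<omega>\<in>space M. hist z n \<omega> = l} \<omega>) \<partial>M)"
        by (intro nn_integral_cong) (auto simp: indicator_def)
      also have "\<dots> = indicator {l. Q l} l * (\<integral>\<^sup>+\<omega>. ennreal (F (z (Suc n) \<omega>)) * indicator {\<omega>\<in>space M. hist z n \<omega> = l} \<omega> \<partial>M)"
        by (rule nn_integral_cmult) (use Fm in auto)
      also have "(\<integral>\<^sup>+\<omega>. ennreal (F (z (Suc n) \<omega>)) * indicator {\<omega>\<in>space M. hist z n \<omega> = l} \<omega> \<partial>M)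
          = (\<integral>\<^sup>+y'. (\<integral>\<^sup>+\<omega>. (ennreal (F (z (Suc n) \<omega>)) * indicator {\<omega>\<in>space M. hist z n \<omega> = l} \<omega>) * indicator {\<omega>\<in>space M. z (Suc n) \<omega> = y'} \<omega> \<partial>M) \<partial>count_space UNIV)"
        by (rule disc[OF zm]) (use Fm in auto)
      also have "\<dots> = (\<integral>\<^sup>+y'. ennreal (F y') * E2 l y' \<partial>count_space UNIV)"
      proof (rule nn_integral_cong)
        fix y'
        have "(\<integral>\<^sup>+\<omega>. (ennreal (F (z (Suc n) \<omega>)) * indicator {\<omega>\<in>space M. hist z n \<omega> = l} \<omega>) * indicator {\<omega>\<in>space M. z (Suc n) \<omega> = y'} \<omega> \<partial>M)
           = (\<integral>\<^sup>+\<omega>. ennreal (F y') * indicator {\<omega>\<in>space M. hist z n \<omega> = l \<and> z (Suc n) \<omega> = y'} \<omega> \<partial>M)"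
          by (intro nn_integral_cong) (auto simp: indicator_def)
        also have "\<dots> = ennreal (F y') * E2 l y'"
          unfolding E2_def by (rule nn_integral_cmult_indicator) measurable
        finally show "(\<integral>\<^sup>+\<omega>. (ennreal (F (z (Suc n) \<omega>)) * indicator {\<omega>\<in>space M. hist z n \<omega> = l} \<omega>) * indicator {\<omega>\<in>space M. z (Suc n) \<omega> = y'} \<omega> \<partial>M) = ennreal (F y') * E2 l y'" .
      qed
      finally show "(\<integral>\<^sup>+\<omega>. (ennreal (F (z (Suc n) \<omega>)) * indicator {\<omega>. Q (hist z n \<omega>)} \<omega>) * indicator {\<omega>\<in>space M. hist z n \<omega> = l} \<omega> \<partial>M)
          = indicator {l. Q l} l * (\<integral>\<^sup>+y'. ennreal (F y') * E2 l y' \<partial>count_space UNIV)" .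
    qed
    finally show ?thesis .
  qed
  have R: "(\<integral>\<^sup>+\<omega>. ennreal (F (z n \<omega>)) * indicator {\<omega>. Q (hist z n \<omega>)} \<omega> \<partial>M)
     = (\<integral>\<^sup>+l. indicator {l. Q l} l * (ennreal (F (last l)) * E l) \<partial>count_space UNIV)"
  proof -
    have "(\<integral>\<^sup>+\<omega>. ennreal (F (z n \<omega>)) * indicator {\<omega>. Q (hist z n \<omega>)} \<omega> \<partial>M)
      = (\<integral>\<^sup>+l. (\<integral>\<^sup>+\<omega>. (ennreal (F (z n \<omega>)) * indicator {\<omega>. Q (hist z n \<omega>)} \<omega>) * indicator {\<omega>\<in>space M. hist z n \<omega> = l} \<omega> \<partial>M) \<partial>count_space UNIV)"
      by (rule disc[OF hm, of "\<lambda>\<omega>. ennreal (F (z n \<omega>)) * indicator {\<omega>. Q (hist z n \<omega>)} \<omega>"]) (use Fm Qm in simp)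
    also have "\<dots> = (\<integral>\<^sup>+l. indicator {l. Q l} l * (ennreal (F (last l)) * E l) \<partial>count_space UNIV)"
    proof (rule nn_integral_cong)
      fix l
      have "(\<integral>\<^sup>+\<omega>. (ennreal (F (z n \<omega>)) * indicator {\<omega>. Q (hist z n \<omega>)} \<omega>) * indicator {\<omega>\<in>space M. hist z n \<omega> = l} \<omega> \<partial>M)
          = (\<integral>\<^sup>+\<omega>. (indicator {l. Q l} l * ennreal (F (last l))) * indicator {\<omega>\<in>space M. hist z n \<omega> = l} \<omega> \<partial>M)"
        by (intro nn_integral_cong) (auto simp: indicator_def hist_last[of z n, symmetric])
      also have "\<dots> = (indicator {l. Q l} l * ennreal (F (last l))) * E l"
        unfolding E_def by (rule nn_integral_cmult_indicator) measurable
      finally show "(\<integral>\<^sup>+\<omega>. (ennreal (F (z n \<omega>)) * indicator {\<omega>. Q (hist z n \<omega>)} \<omega>) * indicator {\<omega>\<in>space M. hist z n \<omega> = l} \<omega> \<partial>M)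
          = indicator {l. Q l} l * (ennreal (F (last l)) * E l)" by (simp add: mult.assoc)
    qed
    finally show ?thesis .
  qed
  have pw: "indicator {l. Q l} l * (\<integral>\<^sup>+y'. ennreal (F y') * E2 l y' \<partial>count_space UNIV)
      \<le> indicator {l. Q l} l * (ennreal (F (last l)) * E l)" for l
  proof (cases "Q l \<and> length l = Suc n \<and> E l \<noteq> 0")
    case False
    have E20: "E2 l y' = 0" if "\<not> (Q l \<and> length l = Suc n \<and> E l \<noteq> 0)" "Q l" for y'
    proof (cases "length l = Suc n")
      case True
      then have "E l = 0" using that by auto
      have "E2 l y' \<le> E l" unfolding E_def E2_def by (rule emeasure_mono) (auto intro: Hs)
      then show ?thesis using \<open>E l = 0\<close> by simp
    next
      case False
      then have em: "{\<omega>\<in>space M. hist z n \<omega> = l \<and> z (Suc n) \<omega> = y'} = {}" by auto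
      show ?thesis unfolding E2_def em by simp
    qed
    show ?thesis
    proof (cases "Q l")
      case True
      then show ?thesis using E20[OF False True] by simp
    qed simp
  next
    case True
    then have Ql: "Q l" and len: "length l = Suc n" and El: "E l \<noteq> 0" by auto
    define P where "P = measure M {\<omega>\<in>space M. hist z n \<omega> = l}"
    have EP: "E l = ennreal P" unfolding E_def P_def by (simp add: emeasure_eq_measure)
    have Ppos: "0 < P" using El EP by (metis ennreal_0 measure_nonneg order_le_less P_def)
    have E2P: "E2 l y' = ennreal (P * Pi (last l) y')" for y'
      unfolding E2_def P_def by (simp add: emeasure_eq_measure markov_list[OF markov len])
    have supp: "Pi (last l) y' = 0" if "int m < norm1 (y' - last l)" for y'
    proof -
      have sub: "{\<omega>\<in>space M. hist z n \<omega> = l \<and> z (Suc n) \<omega> = y'} \<subseteq> {\<omega>\<in>space M. \<not> norm1 (z (Suc n) \<omega> - z n \<omega>) \<le> int m}"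
        using that by (auto simp: hist_last[of z n, symmetric])
      have "{\<omega>\<in>space M. \<not> norm1 (z (Suc n) \<omega> - z n \<omega>) \<le> int m} \<in> null_sets M"
      proof -
        have pm: "Measurable.pred M (\<lambda>\<omega>. norm1 (z (Suc n) \<omega> - z n \<omega>) \<le> int m)"
        proof -
          have "(\<lambda>\<omega>. norm1 (a - z n \<omega>) \<le> int m) \<in> measurable M (count_space UNIV)" for a
            using measurable_compose_countable[of "\<lambda>b \<omega>. norm1 (a - b) \<le> int m" M "count_space UNIV" "z n"] zm by simp
          then show ?thesis
            using measurable_compose_countable[of "\<lambda>a \<omega>. norm1 (a - z n \<omega>) \<le> int m" M "count_space UNIV" "z (Suc n)"] zm by simp
        qed
        have Ns: "{\<omega>\<in>space M. \<not> norm1 (z (Suc n) \<omega> - z n \<omega>) \<le> int m} \<in> sets M"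
          using pm by measurable
        show ?thesis unfolding AE_iff_null_sets[OF Ns] using A1[of n] by eventually_elim auto
      qed
      then have N0: "emeasure M {\<omega>\<in>space M. \<not> norm1 (z (Suc n) \<omega> - z n \<omega>) \<le> int m} = 0"
        and N1: "{\<omega>\<in>space M. \<not> norm1 (z (Suc n) \<omega> - z n \<omega>) \<le> int m} \<in> sets M"
        by (auto simp: null_sets_def)
      have "E2 l y' \<le> 0" unfolding E2_def using emeasure_mono[OF sub N1] N0 by simp
      then have "E2 l y' = 0" by simp
      then have "P * Pi (last l) y' = 0" using E2P[of y'] Ppos kernel_nonneg[of "last l" y'] by simp
      then show ?thesis using Ppos by simp
    qed
    have "(\<integral>\<^sup>+y'. ennreal (F y') * E2 l y' \<partial>count_space UNIV) = (\<integral>\<^sup>+y'. ennreal P * ennreal (Pi (last l) y' * F y') \<partial>count_space UNIV)"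
      by (intro nn_integral_cong) (simp add: E2P Fnn kernel_nonneg ennreal_mult'[symmetric] Ppos order.strict_implies_order mult_ac)
    also have "\<dots> = ennreal P * (\<integral>\<^sup>+y'. ennreal (Pi (last l) y' * F y') \<partial>count_space UNIV)"
      by (rule nn_integral_cmult) simp
    also have "\<dots> \<le> ennreal P * ennreal (F (last l))"
      by (intro mult_left_mono Fstep QG[OF Ql len] supp) auto
    finally show ?thesis using EP by (simp add: Ql mult_ac)
  qed
  show ?thesis unfolding L R by (intro nn_integral_mono pw)
qed

lemma finite_W: "finite {w :: int ^ 'k::finite. norm1 w \<le> int m}"
proof -
  have "{w :: int ^ 'k. norm1 w \<le> int m} \<subseteq> vec_lambda ` (PiE UNIV (\<lambda>_. {- int m..int m}))"
  proof
    fix w :: "int ^ 'k" assume "w \<in> {w. norm1 w \<le> int m}"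
    then have n: "norm1 w \<le> int m" by simp
    have "w $ i \<in> {- int m..int m}" for i
    proof -
      have "\<bar>w $ i\<bar> \<le> (\<Sum>j\<in>UNIV. \<bar>w $ j\<bar>)" by (rule member_le_sum) auto
      then have h: "\<bar>w $ i\<bar> \<le> int m" using n unfolding norm1_def by simp
      show ?thesis using abs_le_D1[OF h] abs_le_D2[OF h] by simp
    qed
    then have "vec_nth w \<in> PiE UNIV (\<lambda>_. {- int m..int m})" by auto
    then show "w \<in> vec_lambda ` (PiE UNIV (\<lambda>_. {- int m..int m}))"
      by (intro image_eqI[of _ _ "vec_nth w"]) auto
  qed
  moreover have "finite (vec_lambda ` (PiE UNIV (\<lambda>_. {- int m..int m})) :: (int ^ 'k) set)"
    by (intro finite_imageI finite_PiE) auto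
  ultimately show ?thesis by (rule finite_subset)
qed

lemma alpha_add: "alpha (y + w) = alpha y + alpha w"
  by (simp add: alpha_def sum.distrib)

lemma abs_alpha_le: "\<bar>alpha w\<bar> \<le> norm1 w"
  unfolding alpha_def norm1_def by (rule sum_abs)

lemma alpha_Zplus: "y \<in> Zplus \<Longrightarrow> alpha y = norm1 y"
  unfolding alpha_def norm1_def Zplus_def by (intro sum.cong) auto

lemma norm1_pos: "y \<noteq> 0 \<Longrightarrow> 1 \<le> norm1 y"
proof -
  assume "y \<noteq> 0"
  then obtain i where i: "y $ i \<noteq> 0" by (metis vec_eq_iff zero_index)
  have "\<bar>y $ i\<bar> \<le> (\<Sum>j\<in>UNIV. \<bar>y $ j\<bar>)" by (rule member_le_sum) auto
  then show ?thesis using i unfolding norm1_def by linarith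
qed

lemma distrib_simplex:
  assumes "y \<in> Zplus" "y \<noteq> 0" shows "distrib y \<in> std_simplex_k"
proof -
  have n: "0 < real_of_int (norm1 y)" using norm1_pos[OF assms(2)] by simp
  have nn: "real_of_int (norm1 y) = (\<Sum>i\<in>UNIV. real_of_int (y $ i))"
    using alpha_Zplus[OF assms(1)] unfolding alpha_def by (metis of_int_sum)
  have "(\<Sum>i\<in>UNIV. real_of_int (y $ i) / real_of_int (norm1 y)) = 1"
    using n by (simp add: sum_divide_distrib[symmetric] nn[symmetric])
  then show ?thesis using assms n unfolding std_simplex_k_def distrib_def Zplus_def
    by auto
qed

lemma compact_simplex: "compact (std_simplex_k :: (real ^ 'k::finite) set)"
proof (subst compact_eq_bounded_closed, intro conjI)
  show "bounded (std_simplex_k :: (real ^ 'k::finite) set)"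
    unfolding bounded_iff
  proof (intro exI ballI)
    fix x :: "real ^ 'k" assume "x \<in> std_simplex_k"
    then have "(\<Sum>i\<in>UNIV. \<bar>x $ i\<bar>) = 1" unfolding std_simplex_k_def by auto
    then show "norm x \<le> 1" using norm_le_l1_cart[of x] by simp
  qed
  have "std_simplex_k = {x :: real ^ 'k. \<forall>i. 0 \<le> x $ i} \<inter> {x. (\<Sum>i\<in>UNIV. x $ i) = 1}"
    unfolding std_simplex_k_def by auto
  also have "closed \<dots>"
  proof (rule closed_Int[OF closed_positive_orthant])
    have "continuous_on UNIV (\<lambda>x::real^'k. x $ i)" for i
      by (rule linear_continuous_on) (rule bounded_linear_vec_nth)
    then have "continuous_on UNIV (\<lambda>x::real^'k. \<Sum>i\<in>UNIV. x $ i)"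
      by (rule continuous_on_sum)
    then show "closed {x::real^'k. (\<Sum>i\<in>UNIV. x $ i) = 1}"
      by (rule closed_Collect_eq) (rule continuous_on_const)
  qed
  finally show "closed (std_simplex_k :: (real ^ 'k::finite) set)" .
qed

lemma exp_step:
  fixes P A :: "'w \<Rightarrow> real" and W :: "'w set"
  assumes "finite W" "\<And>w. w \<in> W \<Longrightarrow> 0 \<le> P w" "(\<Sum>w\<in>W. P w) = 1"
    "(\<Sum>w\<in>W. P w * A w) \<le> - d" "\<And>w. w \<in> W \<Longrightarrow> \<bar>A w\<bar> \<le> mm"
    "0 < \<theta>" "\<theta> * mm \<le> 1" "\<theta> * mm\<^sup>2 \<le> d"
  shows "(\<Sum>w\<in>W. P w * exp (\<theta> * (b + A w))) \<le> exp (\<theta> * b)"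
proof -
  define c where "c = \<theta>\<^sup>2 * mm\<^sup>2"
  have pt: "exp (\<theta> * A w) \<le> 1 + \<theta> * A w + c" if w: "w \<in> W" for w
  proof -
    have a1: "\<bar>A w\<bar> \<le> mm" using assms(5)[OF w] .
    have "\<theta> * \<bar>A w\<bar> \<le> \<theta> * mm" using a1 assms(6) by (intro mult_left_mono) auto
    moreover have "\<bar>\<theta> * A w\<bar> = \<theta> * \<bar>A w\<bar>" using assms(6) by (simp add: abs_mult)
    ultimately have "\<bar>\<theta> * A w\<bar> \<le> 1" using assms(7) by linarith
    then have "exp (\<theta> * A w) \<le> 1 + \<theta> * A w + (\<theta> * A w)\<^sup>2" by (rule exp_le_quad)
    moreover have "\<bar>A w\<bar>\<^sup>2 \<le> mm\<^sup>2" using a1 by (intro power_mono) auto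
    then have "(A w)\<^sup>2 \<le> mm\<^sup>2" by simp
    then have "\<theta>\<^sup>2 * (A w)\<^sup>2 \<le> \<theta>\<^sup>2 * mm\<^sup>2" by (intro mult_left_mono) auto
    then have "(\<theta> * A w)\<^sup>2 \<le> c" unfolding c_def by (simp add: power_mult_distrib)
    ultimately show ?thesis by linarith
  qed
  have "(\<Sum>w\<in>W. P w * exp (\<theta> * A w)) \<le> (\<Sum>w\<in>W. P w * (1 + \<theta> * A w + c))"
    using pt assms(2) by (intro sum_mono mult_left_mono) auto
  also have "(\<Sum>w\<in>W. P w * (1 + \<theta> * A w + c)) = (\<Sum>w\<in>W. P w + \<theta> * (P w * A w) + c * P w)"
    by (intro sum.cong) (auto simp: algebra_simps)
  also have "\<dots> = (\<Sum>w\<in>W. P w) + \<theta> * (\<Sum>w\<in>W. P w * A w) + c * (\<Sum>w\<in>W. P w)"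
    by (simp add: sum.distrib sum_distrib_left)
  also have "\<dots> \<le> 1 + \<theta> * (- d) + \<theta> * d"
  proof -
    have "\<theta> * (\<Sum>w\<in>W. P w * A w) \<le> \<theta> * (- d)" using assms(4,6) by (intro mult_left_mono) auto
    moreover have "\<theta> * (\<theta> * mm\<^sup>2) \<le> \<theta> * d" using assms(6,8) by (intro mult_left_mono) auto
    then have "c \<le> \<theta> * d" unfolding c_def by (simp add: power2_eq_square mult_ac)
    ultimately show ?thesis using assms(3) by simp
  qed
  finally have s: "(\<Sum>w\<in>W. P w * exp (\<theta> * A w)) \<le> 1" by simp
  have "(\<Sum>w\<in>W. P w * exp (\<theta> * (b + A w))) = exp (\<theta> * b) * (\<Sum>w\<in>W. P w * exp (\<theta> * A w))"
    by (simp add: sum_distrib_left distrib_left exp_add mult_ac)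
  also have "\<dots> \<le> exp (\<theta> * b)" using s by simp
  finally show ?thesis .
qed

lemma drift_near:
  fixes Pi :: "int ^ 'k::finite \<Rightarrow> int ^ 'k \<Rightarrow> real"
    and p :: "int ^ 'k \<Rightarrow> real ^ 'k \<Rightarrow> real"
    and K :: "(real ^ 'k) set"
  assumes p_lip: "\<And>w. norm1 w \<le> int m \<Longrightarrow> \<exists>C. C-lipschitz_on std_simplex_k (p w)"
    and a_pos: "0 < a"
    and A2: "\<And>y w. y \<in> Zplus \<Longrightarrow> y \<noteq> 0 \<Longrightarrow> norm1 w \<le> int m \<Longrightarrow>
        \<bar>p w (distrib y) - Pi y (y + w)\<bar> \<le> a / real_of_int (norm1 y)"
    and K_sub: "K \<subseteq> std_simplex_k"
    and c: "c < 0" "\<forall>x\<in>K. (\<Sum>w\<in>{w. norm1 w \<le> int m}. p w x * real_of_int (alpha w)) \<le> c"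
  shows "\<exists>R>0. \<exists>\<delta>>0. \<forall>y. y \<in> Zplus \<longrightarrow> R \<le> real_of_int (norm1 y) \<longrightarrow> (\<exists>x\<in>K. dist (distrib y) x < \<delta>) \<longrightarrow>
     (\<Sum>w\<in>{w. norm1 w \<le> int m}. Pi y (y + w) * real_of_int (alpha w)) \<le> c / 2"
proof -
  define W where "W = {w :: int ^ 'k. norm1 w \<le> int m}"
  have fW: "finite W" unfolding W_def by (rule finite_W)
  have "\<forall>w\<in>W. \<exists>C. C-lipschitz_on std_simplex_k (p w)" using p_lip unfolding W_def by auto
  then obtain C where C: "\<And>w. w \<in> W \<Longrightarrow> (C w)-lipschitz_on std_simplex_k (p w)" by metis
  define B where "B = (\<Sum>w\<in>W. \<bar>C w\<bar>) * real m + 1"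
  have B: "1 \<le> B" unfolding B_def by (simp add: sum_nonneg)
  define \<delta> where "\<delta> = - c / (4 * B)"
  have \<delta>: "0 < \<delta>" unfolding \<delta>_def using B c(1) by (simp add: divide_neg_pos)
  define R where "R = 4 * real (card W) * real m * a / (- c) + 1"
  have R0: "0 \<le> 4 * real (card W) * real m * a / (- c)" using a_pos c(1) by (intro divide_nonneg_pos) auto
  then have R: "1 \<le> R" unfolding R_def by simp
  have main: "\<forall>y. y \<in> Zplus \<longrightarrow> R \<le> real_of_int (norm1 y) \<longrightarrow> (\<exists>x\<in>K. dist (distrib y) x < \<delta>) \<longrightarrow>
     (\<Sum>w\<in>{w. norm1 w \<le> int m}. Pi y (y + w) * real_of_int (alpha w)) \<le> c / 2"
  proof (intro allI impI)
    fix y :: "int ^ 'k"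
    assume yZ: "y \<in> Zplus" and yR: "R \<le> real_of_int (norm1 y)" and "\<exists>x\<in>K. dist (distrib y) x < \<delta>"
    then obtain x where xK: "x \<in> K" and dx: "dist (distrib y) x < \<delta>" by auto
    have ny: "1 \<le> real_of_int (norm1 y)" using R yR by simp
    have y0: "y \<noteq> 0" using ny by (auto simp: norm1_def)
    have xy: "distrib y \<in> std_simplex_k" by (rule distrib_simplex[OF yZ y0])
    have xS: "x \<in> std_simplex_k" using xK K_sub by auto
    define e where "e = a / real_of_int (norm1 y)"
    have termb: "Pi y (y + w) * real_of_int (alpha w) \<le> p w x * real_of_int (alpha w) + e * real m + (\<bar>C w\<bar> * \<delta>) * real m"
      if w: "w \<in> W" for w
    proof -
      define u where "u = Pi y (y + w) - p w (distrib y)"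
      define v where "v = p w (distrib y) - p w x"
      define A where "A = real_of_int (alpha w)"
      have Am: "\<bar>A\<bar> \<le> real m"
      proof -
        have "\<bar>alpha w\<bar> \<le> int m" using abs_alpha_le[of w] w unfolding W_def by simp
        then show ?thesis unfolding A_def by linarith
      qed
      have u: "\<bar>u\<bar> \<le> e" unfolding u_def e_def using A2[OF yZ y0, of w] w unfolding W_def by (simp add: abs_minus_commute)
      have "\<bar>v\<bar> \<le> C w * dist (distrib y) x" unfolding v_def
        using lipschitz_onD[OF C[OF w] xy xS] by (simp add: dist_real_def)
      also have "\<dots> \<le> \<bar>C w\<bar> * \<delta>"
        using dx by (intro mult_mono) auto
      finally have v: "\<bar>v\<bar> \<le> \<bar>C w\<bar> * \<delta>" .
      have "u * A \<le> \<bar>u\<bar> * \<bar>A\<bar>" by (simp add: abs_mult[symmetric])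
      also have "\<dots> \<le> e * real m" using u Am by (intro mult_mono) auto
      finally have 1: "u * A \<le> e * real m" .
      have "v * A \<le> \<bar>v\<bar> * \<bar>A\<bar>" by (simp add: abs_mult[symmetric])
      also have "\<dots> \<le> (\<bar>C w\<bar> * \<delta>) * real m" using v Am by (intro mult_mono) auto
      finally have 2: "v * A \<le> (\<bar>C w\<bar> * \<delta>) * real m" .
      have "Pi y (y + w) * A = p w x * A + u * A + v * A" unfolding u_def v_def by (simp add: algebra_simps)
      then show ?thesis using 1 2 unfolding A_def by linarith
    qed
    have "(\<Sum>w\<in>W. Pi y (y + w) * real_of_int (alpha w)) \<le> (\<Sum>w\<in>W. p w x * real_of_int (alpha w) + e * real m + (\<bar>C w\<bar> * \<delta>) * real m)"
      by (rule sum_mono) (rule termb)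
    also have "\<dots> = (\<Sum>w\<in>W. p w x * real_of_int (alpha w)) + real (card W) * e * real m + \<delta> * ((\<Sum>w\<in>W. \<bar>C w\<bar>) * real m)"
      by (simp add: sum.distrib sum_distrib_left sum_distrib_right mult_ac)
    also have "\<dots> \<le> c + (- c / 4) + (- c / 4)"
    proof -
      have s1: "(\<Sum>w\<in>W. p w x * real_of_int (alpha w)) \<le> c" using c(2) xK unfolding W_def by auto
      have "real (card W) * e * real m = (real (card W) * real m * a) / real_of_int (norm1 y)"
        unfolding e_def by simp
      also have "\<dots> \<le> (real (card W) * real m * a) / R"
        using R yR a_pos by (intro divide_left_mono) auto
      also have "\<dots> \<le> - c / 4"
      proof -
        have "4 * real (card W) * real m * a / (- c) \<le> R" unfolding R_def by simp
        then have "4 * real (card W) * real m * a \<le> R * (- c)"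
          using pos_divide_le_eq[of "- c" "4 * real (card W) * real m * a" R] c(1) by simp
        then show ?thesis using R by (simp add: pos_divide_le_eq mult_ac)
      qed
      finally have s2: "real (card W) * e * real m \<le> - c / 4" .
      have "\<delta> * ((\<Sum>w\<in>W. \<bar>C w\<bar>) * real m) \<le> \<delta> * B" unfolding B_def using \<delta> by (intro mult_left_mono) auto
      also have "\<delta> * B = - c / 4" unfolding \<delta>_def using B by simp
      finally have s3: "\<delta> * ((\<Sum>w\<in>W. \<bar>C w\<bar>) * real m) \<le> - c / 4" .
      show ?thesis using s1 s2 s3 by linarith
    qed
    also have "\<dots> = c / 2" by simp
    finally show "(\<Sum>w\<in>{w. norm1 w \<le> int m}. Pi y (y + w) * real_of_int (alpha w)) \<le> c / 2" unfolding W_def .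
  qed
  show ?thesis
  proof (rule exI[of _ R], rule conjI)
    show "0 < R" using R by simp
    show "\<exists>\<delta>>0. \<forall>y. y \<in> Zplus \<longrightarrow> R \<le> real_of_int (norm1 y) \<longrightarrow> (\<exists>x\<in>K. dist (distrib y) x < \<delta>) \<longrightarrow>
     (\<Sum>w\<in>{w. norm1 w \<le> int m}. Pi y (y + w) * real_of_int (alpha w)) \<le> c / 2"
      by (rule exI[of _ \<delta>], rule conjI, rule \<delta>, rule main)
  qed
qed

theorem proposition2:
  fixes M :: "'a measure"
    and z :: "nat \<Rightarrow> 'a \<Rightarrow> int ^ 'k::finite"
    and Pi :: "int ^ 'k \<Rightarrow> int ^ 'k \<Rightarrow> real"
    and p :: "int ^ 'k \<Rightarrow> real ^ 'k \<Rightarrow> real"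
    and m :: nat and a :: real
    and K :: "(real ^ 'k) set"
  assumes prob: "prob_space M"
    and meas: "\<And>n. z n \<in> measurable M (count_space UNIV)"
    and state: "\<And>n. AE \<omega> in M. z n \<omega> \<in> Zplus"
    and kernel_nonneg: "\<And>y y'. 0 \<le> Pi y y'"
    and kernel_sum: "\<And>y. y \<in> Zplus \<Longrightarrow> (Pi y has_sum 1) UNIV"
    and markov: "\<And>n (s :: nat \<Rightarrow> int ^ 'k).
        measure M {\<omega> \<in> space M. \<forall>i\<le>Suc n. z i \<omega> = s i}
      = measure M {\<omega> \<in> space M. \<forall>i\<le>n. z i \<omega> = s i} * Pi (s n) (s (Suc n))"
    and m_pos: "1 \<le> m"
    and A1: "\<And>n. AE \<omega> in M. norm1 (z (Suc n) \<omega> - z n \<omega>) \<le> int m"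
    and p_range: "\<And>w x. norm1 w \<le> int m \<Longrightarrow> x \<in> std_simplex_k \<Longrightarrow> 0 \<le> p w x \<and> p w x \<le> 1"
    and p_lip: "\<And>w. norm1 w \<le> int m \<Longrightarrow> \<exists>C. C-lipschitz_on std_simplex_k (p w)"
    and a_pos: "0 < a"
    and A2: "\<And>y w. y \<in> Zplus \<Longrightarrow> y \<noteq> 0 \<Longrightarrow> norm1 w \<le> int m \<Longrightarrow>
        \<bar>p w (distrib y) - Pi y (y + w)\<bar> \<le> a / real_of_int (norm1 y)"
    and K_compact: "compact K"
    and K_sub: "K \<subseteq> std_simplex_k"
    and drift: "\<exists>c<0. \<forall>x\<in>K.
        (\<Sum>w\<in>{w. norm1 w \<le> int m}. p w x * real_of_int (alpha w)) \<le> c"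
  shows "AE \<omega> in M. \<not> (limit_points (\<lambda>n. distrib (z n \<omega>)) \<subseteq> K
              \<and> filterlim (\<lambda>n. norm1 (z n \<omega>)) at_top sequentially)"
proof -
  interpret prob_space M by (rule prob)
  have zm[measurable]: "z i \<in> measurable M (count_space UNIV)" for i by (rule meas)
  obtain c where c: "c < 0" "\<forall>x\<in>K. (\<Sum>w\<in>{w. norm1 w \<le> int m}. p w x * real_of_int (alpha w)) \<le> c"
    using drift by blast
  obtain R \<delta> where R: "0 < R" and \<delta>: "0 < \<delta>" and Rdrift: "\<And>y. y \<in> Zplus \<Longrightarrow> R \<le> real_of_int (norm1 y) \<Longrightarrow>
      (\<exists>x\<in>K. dist (distrib y) x < \<delta>) \<Longrightarrow>
      (\<Sum>w\<in>{w. norm1 w \<le> int m}. Pi y (y + w) * real_of_int (alpha w)) \<le> c / 2"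
    using drift_near[OF p_lip a_pos A2 K_sub c] by blast
  define W where "W = {w :: int ^ 'k. norm1 w \<le> int m}"
  have fW: "finite W" unfolding W_def by (rule finite_W)
  define d where "d = - c / 2"
  have d: "0 < d" using c(1) by (simp add: d_def)
  define mm where "mm = real m"
  have mm: "1 \<le> mm" using m_pos by (simp add: mm_def)
  define \<theta> where "\<theta> = min (1 / mm) (d / mm\<^sup>2)"
  have \<theta>: "0 < \<theta>" using mm d by (simp add: \<theta>_def)
  have \<theta>1: "\<theta> * mm \<le> 1"
  proof -
    have "\<theta> \<le> 1 / mm" by (simp add: \<theta>_def)
    then show ?thesis using mm by (simp add: field_simps)
  qed
  have \<theta>2: "\<theta> * mm\<^sup>2 \<le> d"
  proof -
    have "\<theta> \<le> d / mm\<^sup>2" by (simp add: \<theta>_def)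
    moreover have "0 < mm\<^sup>2" using mm by simp
    ultimately show ?thesis by (simp add: field_simps)
  qed
  define F where "F y = exp (\<theta> * real_of_int (alpha y))" for y :: "int ^ 'k"
  have Fnn: "0 \<le> F y" for y by (simp add: F_def)
  define G where "G = {y. y \<in> Zplus \<and> R \<le> real_of_int (norm1 y) \<and> (\<exists>x\<in>K. dist (distrib y) x < \<delta>)}"
  have Fstep: "(\<integral>\<^sup>+y'. ennreal (Pi y y' * F y') \<partial>count_space UNIV) \<le> ennreal (F y)"
    if yG: "y \<in> G" and supp: "\<And>y'. int m < norm1 (y' - y) \<Longrightarrow> Pi y y' = 0" for y
  proof -
    have yZ: "y \<in> Zplus" using yG by (simp add: G_def)
    define S where "S = (\<lambda>w. y + w) ` W"
    have fS: "finite S" unfolding S_def using fW by simp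
    have inj: "inj_on (\<lambda>w. y + w) W" by (auto simp: inj_on_def)
    have out: "Pi y y' = 0" if "y' \<notin> S" for y'
    proof -
      have "y' - y \<notin> W" using that unfolding S_def by (metis add.commute diff_add_cancel image_eqI)
      then show ?thesis using supp[of y'] unfolding W_def by simp
    qed
    have "(\<integral>\<^sup>+y'. ennreal (Pi y y' * F y') \<partial>count_space UNIV) = (\<Sum>y'\<in>S. ennreal (Pi y y' * F y'))"
      by (rule nn_integral_count_space'[OF fS]) (auto simp: out)
    also have "\<dots> = (\<Sum>w\<in>W. ennreal (Pi y (y + w) * F (y + w)))"
      unfolding S_def by (simp add: sum.reindex[OF inj])
    also have "\<dots> = ennreal (\<Sum>w\<in>W. Pi y (y + w) * F (y + w))"
      by (rule sum_ennreal) (simp add: kernel_nonneg Fnn)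
    also have "\<dots> \<le> ennreal (F y)"
    proof (rule ennreal_leI)
      have s1: "(\<Sum>w\<in>W. Pi y (y + w)) = 1"
      proof -
        have "infsum (Pi y) UNIV = 1" by (rule infsumI[OF kernel_sum[OF yZ]])
        moreover have "infsum (Pi y) UNIV = infsum (Pi y) S"
          by (rule infsum_cong_neutral) (auto simp: out)
        moreover have "infsum (Pi y) S = (\<Sum>w\<in>W. Pi y (y + w))"
          using fS unfolding S_def by (simp add: sum.reindex[OF inj])
        ultimately show ?thesis by simp
      qed
      have s2: "(\<Sum>w\<in>W. Pi y (y + w) * real_of_int (alpha w)) \<le> - d"
        using Rdrift[OF yZ] yG unfolding G_def W_def d_def by auto
      have s3: "\<bar>real_of_int (alpha w)\<bar> \<le> mm" if "w \<in> W" for w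
      proof -
        have "\<bar>alpha w\<bar> \<le> int m" using abs_alpha_le[of w] that unfolding W_def by simp
        then show ?thesis unfolding mm_def by linarith
      qed
      have "(\<Sum>w\<in>W. Pi y (y + w) * exp (\<theta> * (real_of_int (alpha y) + real_of_int (alpha w)))) \<le> exp (\<theta> * real_of_int (alpha y))"
        by (rule exp_step[OF fW _ s1 s2 s3 \<theta> \<theta>1 \<theta>2]) (simp add: kernel_nonneg)
      then show "(\<Sum>w\<in>W. Pi y (y + w) * F (y + w)) \<le> F y"
        by (simp add: F_def alpha_add)
    qed
    finally show ?thesis .
  qed
  define Q where "Q N y0 n l = (l ! N = y0 \<and> (\<forall>i\<in>{N..N+n}. l ! i \<in> G))"
    for N :: nat and y0 :: "int ^ 'k" and n :: nat and l :: "(int ^ 'k) list"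
  define g where "g N y0 n \<omega> = ennreal (F (z (N + n) \<omega>)) * indicator {\<omega>. Q N y0 n (hist z (N + n) \<omega>)} \<omega>"
    for N y0 n \<omega>
  have hm[measurable]: "hist z n \<in> measurable M (count_space UNIV)" for n by (rule hist_measurable[OF meas])
  have gm: "g N y0 n \<in> borel_measurable M" for N y0 n
  proof -
    have "(\<lambda>\<omega>. indicator {l. Q N y0 n l} (hist z (N + n) \<omega>) :: ennreal) \<in> borel_measurable M" by measurable
    moreover have "(\<lambda>\<omega>. ennreal (F (z (N + n) \<omega>))) \<in> borel_measurable M" by measurable
    ultimately show ?thesis unfolding g_def by (simp add: indicator_def)
  qed
  have AEfin: "AE \<omega> in M. liminf (\<lambda>n. g N y0 n \<omega>) \<noteq> \<infinity>" for N y0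
  proof -
    have step: "integral\<^sup>N M (g N y0 (Suc n)) \<le> integral\<^sup>N M (g N y0 n)" for n
    proof -
      have "integral\<^sup>N M (g N y0 (Suc n)) \<le> (\<integral>\<^sup>+\<omega>. ennreal (F (z (Suc (N + n)) \<omega>)) * indicator {\<omega>. Q N y0 n (hist z (N + n) \<omega>)} \<omega> \<partial>M)"
      proof (rule nn_integral_mono)
        fix \<omega>
        have "Q N y0 n (hist z (N + n) \<omega>)" if "Q N y0 (Suc n) (hist z (N + Suc n) \<omega>)"
          using that unfolding Q_def by (auto simp: hist_nth)
        then show "g N y0 (Suc n) \<omega> \<le> ennreal (F (z (Suc (N + n)) \<omega>)) * indicator {\<omega>. Q N y0 n (hist z (N + n) \<omega>)} \<omega>"
          unfolding g_def by (auto simp: indicator_def)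
      qed
      also have "\<dots> \<le> (\<integral>\<^sup>+\<omega>. ennreal (F (z (N + n) \<omega>)) * indicator {\<omega>. Q N y0 n (hist z (N + n) \<omega>)} \<omega> \<partial>M)"
      proof (rule key_step[OF prob meas kernel_nonneg markov A1 Fnn Fstep])
        fix l :: "(int ^ 'k) list" assume "Q N y0 n l" "length l = Suc (N + n)"
        then have "l \<noteq> []" "l ! (N + n) \<in> G" unfolding Q_def by auto
        then show "last l \<in> G" using \<open>length l = Suc (N + n)\<close> by (simp add: last_conv_nth)
      qed auto
      also have "\<dots> = integral\<^sup>N M (g N y0 n)" unfolding g_def ..
      finally show ?thesis .
    qed
    have bound: "integral\<^sup>N M (g N y0 n) \<le> ennreal (F y0)" for n
    proof (induction n)
      case 0
      have "integral\<^sup>N M (g N y0 0) \<le> (\<integral>\<^sup>+\<omega>. ennreal (F y0) \<partial>M)"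
      proof (rule nn_integral_mono)
        fix \<omega>
        show "g N y0 0 \<omega> \<le> ennreal (F y0)"
          unfolding g_def Q_def by (auto simp: indicator_def hist_nth)
      qed
      also have "\<dots> = ennreal (F y0)" by (simp add: emeasure_space_1)
      finally show ?case .
    next
      case (Suc n)
      then show ?case using step[of n] by (rule order.trans[rotated])
    qed
    have "(\<integral>\<^sup>+\<omega>. liminf (\<lambda>n. g N y0 n \<omega>) \<partial>M) \<le> liminf (\<lambda>n. integral\<^sup>N M (g N y0 n))"
      by (rule nn_integral_liminf) (rule gm)
    also have "\<dots> \<le> limsup (\<lambda>n. integral\<^sup>N M (g N y0 n))"
      by (rule Liminf_le_Limsup) simp
    also have "\<dots> \<le> ennreal (F y0)"
      by (rule Limsup_bounded) (simp add: bound)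
    finally have le: "(\<integral>\<^sup>+\<omega>. liminf (\<lambda>n. g N y0 n \<omega>) \<partial>M) \<le> ennreal (F y0)" .
    have "(\<integral>\<^sup>+\<omega>. liminf (\<lambda>n. g N y0 n \<omega>) \<partial>M) \<noteq> \<infinity>"
    proof
      assume "(\<integral>\<^sup>+\<omega>. liminf (\<lambda>n. g N y0 n \<omega>) \<partial>M) = \<infinity>"
      then show False using le by (simp add: top_unique)
    qed
    moreover have "(\<lambda>\<omega>. liminf (\<lambda>n. g N y0 n \<omega>)) \<in> borel_measurable M"
      by (rule borel_measurable_liminf) (rule gm)
    ultimately show ?thesis by (intro nn_integral_PInf_AE) auto
  qed
  have AE1: "AE \<omega> in M. \<forall>N y0. liminf (\<lambda>n. g N y0 n \<omega>) \<noteq> \<infinity>"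
    using AEfin by (simp add: AE_all_countable)
  have AE2: "AE \<omega> in M. \<forall>n. z n \<omega> \<in> Zplus"
    using state by (simp add: AE_all_countable)
  show ?thesis
    using AE1 AE2
  proof eventually_elim
    case (elim \<omega>)
    then have HL: "\<And>N y0. liminf (\<lambda>n. g N y0 n \<omega>) \<noteq> \<infinity>" and HZ: "\<And>n. z n \<omega> \<in> Zplus" by auto
    show ?case
    proof
      assume "limit_points (\<lambda>n. distrib (z n \<omega>)) \<subseteq> K \<and> filterlim (\<lambda>n. norm1 (z n \<omega>)) at_top sequentially"
      then have LP: "limit_points (\<lambda>n. distrib (z n \<omega>)) \<subseteq> K"
        and lim: "filterlim (\<lambda>n. norm1 (z n \<omega>)) at_top sequentially" by auto
      have ev1: "eventually (\<lambda>n. R \<le> real_of_int (norm1 (z n \<omega>))) sequentially"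
      proof -
        have "eventually (\<lambda>n. \<lceil>R\<rceil> \<le> norm1 (z n \<omega>)) sequentially"
          using lim unfolding filterlim_at_top by blast
        then show ?thesis
          by eventually_elim (meson le_of_int_ceiling of_int_le_iff order_trans)
      qed
      have ev0: "eventually (\<lambda>n. z n \<omega> \<noteq> 0) sequentially"
        using ev1 by eventually_elim (use R in \<open>auto simp: norm1_def\<close>)
      have ev2: "eventually (\<lambda>n. z n \<omega> \<noteq> 0 \<longrightarrow> (\<exists>x\<in>K. dist (distrib (z n \<omega>)) x < \<delta>)) sequentially"
      proof (rule ccontr)
        assume "\<not> ?thesis"
        from not_eventually_sequentiallyD[OF this] obtain r :: "nat \<Rightarrow> nat" where
          r: "strict_mono r" and rn: "\<And>n. z (r n) \<omega> \<noteq> 0" and rf: "\<And>n. \<not> (\<exists>x\<in>K. dist (distrib (z (r n) \<omega>)) x < \<delta>)"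
          by blast
        have "\<forall>n. distrib (z (r n) \<omega>) \<in> std_simplex_k" using distrib_simplex[OF HZ rn] by blast
        from seq_compactE[OF compact_imp_seq_compact[OF compact_simplex] this]
        obtain l r' where l: "strict_mono (r' :: nat \<Rightarrow> nat)" "((\<lambda>n. distrib (z (r n) \<omega>)) \<circ> r') \<longlonglongrightarrow> l"
          by blast
        have "l \<in> limit_points (\<lambda>n. distrib (z n \<omega>))"
          unfolding limit_points_def
          using strict_mono_o[OF r l(1)] l(2) by (auto simp: o_def intro!: exI[of _ "r \<circ> r'"])
        then have lK: "l \<in> K" using LP by auto
        have "eventually (\<lambda>n. dist (((\<lambda>n. distrib (z (r n) \<omega>)) \<circ> r') n) l < \<delta>) sequentially"
          by (rule tendstoD[OF l(2) \<delta>])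
        then obtain n0 where "dist (distrib (z (r (r' n0)) \<omega>)) l < \<delta>"
          by (auto simp: eventually_sequentially)
        then show False using rf[of "r' n0"] lK by auto
      qed
      have "eventually (\<lambda>n. z n \<omega> \<in> G) sequentially"
        using ev0 ev1 ev2 by eventually_elim (auto simp: G_def HZ)
      then obtain N where NG: "\<And>n. N \<le> n \<Longrightarrow> z n \<omega> \<in> G"
        by (auto simp: eventually_sequentially)
      define y0 where "y0 = z N \<omega>"
      have geq: "g N y0 n \<omega> = ennreal (exp (\<theta> * real_of_int (norm1 (z (n + N) \<omega>))))" for n
      proof -
        have "Q N y0 n (hist z (N + n) \<omega>)" unfolding Q_def y0_def by (auto simp: hist_nth NG)
        then show ?thesis unfolding g_def F_def by (simp add: alpha_Zplus[OF HZ] add.commute)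
      qed
      have "filterlim (\<lambda>n. real_of_int (norm1 (z n \<omega>))) at_top sequentially"
        by (rule filterlim_compose[OF filterlim_real_of_int_at_top lim])
      then have "filterlim (\<lambda>n. \<theta> * real_of_int (norm1 (z n \<omega>))) at_top sequentially"
        by (rule filterlim_tendsto_pos_mult_at_top[OF tendsto_const \<theta>])
      then have "filterlim (\<lambda>n. exp (\<theta> * real_of_int (norm1 (z n \<omega>)))) at_top sequentially"
        by (rule filterlim_compose[OF exp_at_top])
      then have "(\<lambda>n. ennreal (exp (\<theta> * real_of_int (norm1 (z n \<omega>))))) \<longlonglongrightarrow> top"
        by (simp add: ennreal_tendsto_top_eq_at_top)
      then have "(\<lambda>n. ennreal (exp (\<theta> * real_of_int (norm1 (z (n + N) \<omega>))))) \<longlonglongrightarrow> top"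
        by (rule LIMSEQ_ignore_initial_segment)
      then have "(\<lambda>n. g N y0 n \<omega>) \<longlonglongrightarrow> top" by (simp add: geq)
      then have "liminf (\<lambda>n. g N y0 n \<omega>) = top" by (rule lim_imp_Liminf[rotated]) simp
      then show False using HL[of N y0] by simp
    qed
  qed
qed

end
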